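(* Let $\|\cdot\|$ be a submultiplicative matrix norm on $\mathbb{C}^{m\times m}$, let $n\ge 2$, and let $$A=\begin{bmatrix} A_1 & B_1 & & & \\ C_1 & A_2 & B_2 & & \\ & \ddots & \ddots & \ddots & \\ & & C_{n-2} & A_{n-1} & B_{n-1}\\ & & & C_{n-1} & A_n\end{bmatrix},\qquad A_i,B_i,C_i\in\mathbb{C}^{m\times m},$$ be a block tridiagonal matrix such that $A$ is nonsingular, $B_i$ and $C_i$ are nonsingular for $i=1,\dots,n-1$, $A$ is row block diagonally dominant with respect to $\|\cdot\|$, and $$\|A_1^{-1}B_1\|<1\quad\text{and}\quad \|A_n^{-1}C_{n-1}\|<1.$$ Let $U_i,Y_i$ ($i=1,\dots,n$) be the matrices defined by the recurrences in the context. Then the sequence $\{\|U_i\|\}_{i=1}^n$ is strictly increasing and the sequence $\{\|Y_i\|\}_{i=1}^n$ is strictly decreasing.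
   Context: Row block diagonal dominance: a block matrix $A=[A_{ij}]$ with blocks $A_{ij}\in\mathbb{C}^{m\times m}$, $i,j=1,\dots,n$, is called row block diagonally dominant (with respect to $\|\cdot\|$) if all diagonal blocks $A_{ii}$ are nonsingular and $\sum_{j\ne i}\|A_{ii}^{-1}A_{ij}\|\le 1$ for $i=1,\dots,n$. For the block tridiagonal $A$ above (block $(i,i)$ is $A_i$, block $(i,i+1)$ is $B_i$, block $(i+1,i)$ is $C_i$), with the convention $C_0=B_n=0$, this means: every $A_i$ is nonsingular and $\|A_i^{-1}C_{i-1}\|+\|A_i^{-1}B_i\|\le 1$ for $i=1,\dots,n$. The matrices $U_i,V_i,X_i,Y_i$ are defined recursively by $U_1=I$, $U_2=-B_1^{-1}A_1U_1$, $U_i=-B_{i-1}^{-1}(C_{i-2}U_{i-2}+A_{i-1}U_{i-1})$ for $i=3,\dots,n$; $V_n=(A_nU_n+C_{n-1}U_{n-1})^{-1}$, $V_{n-1}=-V_nA_nB_{n-1}^{-1}$, $V_i=-(V_{i+1}A_{i+1}+V_{i+2}C_{i+1})B_i^{-1}$ for $i=n-2,\dots,1$; $X_1=I$, $X_2=-X_1A_1C_1^{-1}$, $X_i=-(X_{i-2}B_{i-2}+X_{i-1}A_{i-1})C_{i-1}^{-1}$ for $i=3,\dots,n$; $Y_n=(X_nA_n+X_{n-1}B_{n-1})^{-1}$, $Y_{n-1}=-C_{n-1}^{-1}A_nY_n$, $Y_i=-C_i^{-1}(A_{i+1}Y_{i+1}+B_{i+1}Y_{i+2})$ for $i=n-2,\dots,1$.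 (It is known, by a result of Ikebe, that when $A$ and all $B_i,C_i$ are nonsingular, the inverses appearing here exist, and $A^{-1}=[Z_{ij}]$ with $Z_{ij}=U_iV_j$ for $i\le j$ and $Z_{ij}=Y_iX_j$ for $i\ge j$.) *)

theory Defs
  imports Complex_Main "Jordan_Normal_Form.Matrix"
begin

text \<open>Matrix inverse of a square matrix (meaningful when the matrix is nonsingular).\<close>
definition minv :: "complex mat \<Rightarrow> complex mat" where
  "minv X = (SOME Y. Y \<in> carrier_mat (dim_row X) (dim_row X) \<and>
                     X * Y = 1\<^sub>m (dim_row X) \<and> Y * X = 1\<^sub>m (dim_row X))"

definition submult_mat_norm :: "nat \<Rightarrow> (complex mat \<Rightarrow> real) \<Rightarrow> bool" where
  "submult_mat_norm m N \<longleftrightarrow>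
     (\<forall>X \<in> carrier_mat m m. N X \<ge> 0 \<and> (N X = 0 \<longleftrightarrow> X = 0\<^sub>m m m)) \<and>
     (\<forall>X \<in> carrier_mat m m. \<forall>a. N (a \<cdot>\<^sub>m X) = cmod a * N X) \<and>
     (\<forall>X \<in> carrier_mat m m. \<forall>Y \<in> carrier_mat m m. N (X + Y) \<le> N X + N Y) \<and>
     (\<forall>X \<in> carrier_mat m m. \<forall>Y \<in> carrier_mat m m. N (X * Y) \<le> N X * N Y)"

text \<open>Block matrix (n x n blocks, each m x m); blocks indexed 1..n:
  block (i,j) is blk i j.\<close>
definition block_mat :: "nat \<Rightarrow> nat \<Rightarrow> (nat \<Rightarrow> nat \<Rightarrow> complex mat) \<Rightarrow> complex mat" where
  "block_mat n m blk = mat (n*m) (n*m)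
     (\<lambda>(r,c). blk (r div m + 1) (c div m + 1) $$ (r mod m, c mod m))"

definition tridiag_blocks :: "nat \<Rightarrow> (nat \<Rightarrow> complex mat) \<Rightarrow> (nat \<Rightarrow> complex mat) \<Rightarrow>
    (nat \<Rightarrow> complex mat) \<Rightarrow> nat \<Rightarrow> nat \<Rightarrow> complex mat" where
  "tridiag_blocks m A B C i j =
     (if i = j then A i else if j = i + 1 then B i else if i = j + 1 then C j else 0\<^sub>m m m)"

definition row_block_diag_dom ::
    "nat \<Rightarrow> (complex mat \<Rightarrow> real) \<Rightarrow> (nat \<Rightarrow> nat \<Rightarrow> complex mat) \<Rightarrow> bool" where
  "row_block_diag_dom n N blk \<longleftrightarrow>
     (\<forall>i \<in> {1..n}. invertible_mat (blk i i) \<and>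
        (\<Sum>j \<in> {1..n} - {i}. N (minv (blk i i) * blk i j)) \<le> 1)"

fun Useq :: "(nat \<Rightarrow> complex mat) \<Rightarrow> (nat \<Rightarrow> complex mat) \<Rightarrow> (nat \<Rightarrow> complex mat) \<Rightarrow>
    nat \<Rightarrow> nat \<Rightarrow> complex mat" where
  "Useq A B C m 0 = 0\<^sub>m m m"
| "Useq A B C m (Suc 0) = 1\<^sub>m m"
| "Useq A B C m (Suc (Suc 0)) = - (minv (B 1) * A 1 * Useq A B C m 1)"
| "Useq A B C m (Suc (Suc (Suc k))) =
     - (minv (B (k+2)) * (C (k+1) * Useq A B C m (k+1) + A (k+2) * Useq A B C m (k+2)))"

fun Xseq :: "(nat \<Rightarrow> complex mat) \<Rightarrow> (nat \<Rightarrow> complex mat) \<Rightarrow> (nat \<Rightarrow> complex mat) \<Rightarrow>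
    nat \<Rightarrow> nat \<Rightarrow> complex mat" where
  "Xseq A B C m 0 = 0\<^sub>m m m"
| "Xseq A B C m (Suc 0) = 1\<^sub>m m"
| "Xseq A B C m (Suc (Suc 0)) = - (Xseq A B C m 1 * A 1 * minv (C 1))"
| "Xseq A B C m (Suc (Suc (Suc k))) =
     - ((Xseq A B C m (k+1) * B (k+1) + Xseq A B C m (k+2) * A (k+2)) * minv (C (k+2)))"

text \<open>Ybw n k = Y_(n-k), computed backwards from Y_n.\<close>
fun Ybw :: "(nat \<Rightarrow> complex mat) \<Rightarrow> (nat \<Rightarrow> complex mat) \<Rightarrow> (nat \<Rightarrow> complex mat) \<Rightarrow>
    nat \<Rightarrow> nat \<Rightarrow> nat \<Rightarrow> complex mat" where
  "Ybw A B C m n 0 = minv (Xseq A B C m n * A n + Xseq A B C m (n-1) * B (n-1))"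
| "Ybw A B C m n (Suc 0) = - (minv (C (n-1)) * A n * Ybw A B C m n 0)"
| "Ybw A B C m n (Suc (Suc k)) =
     - (minv (C (n-k-2)) * (A (n-k-1) * Ybw A B C m n (Suc k) + B (n-k-1) * Ybw A B C m n k))"

definition Yseq :: "(nat \<Rightarrow> complex mat) \<Rightarrow> (nat \<Rightarrow> complex mat) \<Rightarrow> (nat \<Rightarrow> complex mat) \<Rightarrow>
    nat \<Rightarrow> nat \<Rightarrow> nat \<Rightarrow> complex mat" where
  "Yseq A B C m n i = Ybw A B C m n (n - i)"

end

theory Submission
  imports Defs "Jordan_Normal_Form.Determinant"
begin


lemma inv_ex:
  assumes X: "X \<in> carrier_mat k k" and inv: "invertible_mat X"
  shows "\<exists>Y\<in>carrier_mat k k. X * Y = 1\<^sub>m k \<and> Y * X = 1\<^sub>m k"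
proof -
  from inv obtain Y where 1: "X * Y = 1\<^sub>m (dim_row X)" and 2: "Y * X = 1\<^sub>m (dim_row Y)"
    unfolding invertible_mat_def inverts_mat_def by blast
  have "dim_col Y = k" using arg_cong[OF 1, of dim_col] X by simp
  moreover have "dim_row Y = k" using arg_cong[OF 2, of dim_col] X by simp
  ultimately show ?thesis using 1 2 X by (intro bexI[of _ Y]) auto
qed

lemma minv:
  assumes X: "X \<in> carrier_mat k k" and inv: "invertible_mat X"
  shows "minv X \<in> carrier_mat k k \<and> X * minv X = 1\<^sub>m k \<and> minv X * X = 1\<^sub>m k"
proof -
  have "\<exists>Y. Y \<in> carrier_mat (dim_row X) (dim_row X) \<and>
                     X * Y = 1\<^sub>m (dim_row X) \<and> Y * X = 1\<^sub>m (dim_row X)"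
    using inv_ex[OF X inv] X by auto
  from someI_ex[OF this] show ?thesis unfolding minv_def using X by simp
qed

lemma inv_det:
  assumes X: "X \<in> carrier_mat k k" and inv: "invertible_mat X"
  shows "det X \<noteq> 0"
proof -
  obtain Y where Y: "Y \<in> carrier_mat k k" "X * Y = 1\<^sub>m k" using inv_ex[OF X inv] by blast
  have "det X * det Y = 1" using arg_cong[OF Y(2), of det] det_mult[OF X Y(1)] det_one by simp
  thus ?thesis by auto
qed

lemma det_inv:
  assumes X: "(X :: complex mat) \<in> carrier_mat k k" and d: "det X \<noteq> 0"
  shows "invertible_mat X"
proof -
  have "X \<in> Units (ring_mat TYPE(complex) k ())" by (rule det_non_zero_imp_unit[OF X d])
  then obtain Y where Y: "Y \<in> carrier_mat k k" "X * Y = 1\<^sub>m k" "Y * X = 1\<^sub>m k"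
    unfolding Units_def ring_mat_def by auto
  show ?thesis unfolding invertible_mat_def inverts_mat_def using X Y
    by (intro conjI exI[of _ Y]) auto
qed

lemma one_ne_zero_mat: "(k::nat) \<ge> 1 \<Longrightarrow> (1\<^sub>m k :: complex mat) \<noteq> 0\<^sub>m k k"
proof
  assume "k \<ge> 1" "(1\<^sub>m k :: complex mat) = 0\<^sub>m k k"
  hence "(1\<^sub>m k :: complex mat) $$ (0,0) = 0\<^sub>m k k $$ (0,0)" by simp
  thus False using \<open>k \<ge> 1\<close> by simp
qed

lemma inv_ne0:
  assumes X: "(X::complex mat) \<in> carrier_mat k k" and inv: "invertible_mat X" and k: "k \<ge> 1"
  shows "X \<noteq> 0\<^sub>m k k"
proof
  assume "X = 0\<^sub>m k k"
  obtain Y where Y: "Y \<in> carrier_mat k k" "X * Y = 1\<^sub>m k" using inv_ex[OF X inv] by blast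
  hence "1\<^sub>m k = (0\<^sub>m k k :: complex mat)" using \<open>X = _\<close> by simp
  thus False using one_ne_zero_mat[OF k] by simp
qed

lemma N0: "submult_mat_norm m N \<Longrightarrow> N (0\<^sub>m m m) = 0"
  unfolding submult_mat_norm_def by auto

lemma Npos: "submult_mat_norm m N \<Longrightarrow> X \<in> carrier_mat m m \<Longrightarrow> X \<noteq> 0\<^sub>m m m \<Longrightarrow> N X > 0"
  unfolding submult_mat_norm_def by (metis order_le_less)

lemma Nge0: "submult_mat_norm m N \<Longrightarrow> X \<in> carrier_mat m m \<Longrightarrow> N X \<ge> 0"
  unfolding submult_mat_norm_def by auto

lemma Nneg: assumes "submult_mat_norm m N" "X \<in> carrier_mat m m" shows "N (- X) = N X"
proof -
  have "- X = (-1) \<cdot>\<^sub>m X" using assms(2) by (intro eq_matI) auto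
  thus ?thesis using assms unfolding submult_mat_norm_def by auto
qed

lemma Nadd: "submult_mat_norm m N \<Longrightarrow> X \<in> carrier_mat m m \<Longrightarrow> Y \<in> carrier_mat m m \<Longrightarrow> N (X + Y) \<le> N X + N Y"
  unfolding submult_mat_norm_def by auto

lemma Nmult: "submult_mat_norm m N \<Longrightarrow> X \<in> carrier_mat m m \<Longrightarrow> Y \<in> carrier_mat m m \<Longrightarrow> N (X * Y) \<le> N X * N Y"
  unfolding submult_mat_norm_def by auto



lemma row_bound:
  assumes norm: "submult_mat_norm m N"
    and car: "A \<in> carrier_mat m m" "B \<in> carrier_mat m m" "C \<in> carrier_mat m m"
      "W \<in> carrier_mat m m" "W1 \<in> carrier_mat m m" "W2 \<in> carrier_mat m m"
    and invA: "invertible_mat A"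
    and eq: "A * W = - (C * W1 + B * W2)"
  shows "N W \<le> N (minv A * C) * N W1 + N (minv A * B) * N W2"
proof -
  have mA: "minv A \<in> carrier_mat m m" "minv A * A = 1\<^sub>m m" using minv[OF car(1) invA] by auto
  have "W = minv A * (A * W)" using mA car by (simp add: assoc_mult_mat[symmetric])
  also have "\<dots> = - (minv A * (C * W1 + B * W2))" using eq mA car by simp
  also have "minv A * (C * W1 + B * W2) = (minv A * C) * W1 + (minv A * B) * W2"
  proof -
    have "minv A * (C * W1 + B * W2) = minv A * (C * W1) + minv A * (B * W2)"
      by (rule mult_add_distrib_mat[of "minv A" m m "C*W1" m "B*W2"]) (use car mA in simp_all)
    also have "minv A * (C * W1) = (minv A * C) * W1" using car mA by simp
    also have "minv A * (B * W2) = (minv A * B) * W2" using car mA by simp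
    finally show ?thesis .
  qed
  finally have W: "W = - ((minv A * C) * W1 + (minv A * B) * W2)" .
  have c1: "minv A * C \<in> carrier_mat m m" "minv A * B \<in> carrier_mat m m" using mA car by auto
  have "N W = N ((minv A * C) * W1 + (minv A * B) * W2)"
    unfolding W using c1 car by (intro Nneg[OF norm]) auto
  also have "\<dots> \<le> N ((minv A * C) * W1) + N ((minv A * B) * W2)"
    using c1 car by (intro Nadd[OF norm]) auto
  also have "\<dots> \<le> N (minv A * C) * N W1 + N (minv A * B) * N W2"
    using c1 car Nmult[OF norm] by (intro add_mono) auto
  finally show ?thesis .
qed

lemma incr:
  fixes f a b :: "nat \<Rightarrow> real"
  assumes base: "f 1 < f 2"
    and rec: "\<forall>i\<in>{2..<n}. f i \<le> a i * f (i-1) + b i * f (Suc i) \<and> a i > 0 \<and> b i \<ge> 0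
                \<and> a i + b i \<le> 1 \<and> f (Suc i) \<ge> 0"
  shows "\<forall>i\<in>{1..<n}. f i < f (Suc i)"
proof -
  have "1 \<le> i \<longrightarrow> i < n \<longrightarrow> f i < f (Suc i)" for i
  proof (induction i)
    case 0 then show ?case by simp
  next
    case (Suc i)
    show ?case
    proof (cases "i = 0")
      case True then show ?thesis using base by (simp add: numeral_2_eq_2)
    next
      case False
      show ?thesis
      proof (intro impI)
        assume "1 \<le> Suc i" "Suc i < n"
        with False Suc.IH have IH: "f i < f (Suc i)" by simp
        have r: "f (Suc i) \<le> a (Suc i) * f i + b (Suc i) * f (Suc (Suc i))" "a (Suc i) > 0"
          "b (Suc i) \<ge> 0" "a (Suc i) + b (Suc i) \<le> 1" "f (Suc (Suc i)) \<ge> 0"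
          using rec[rule_format, of "Suc i"] \<open>Suc i < n\<close> False by auto
        have 1: "a (Suc i) * f i < a (Suc i) * f (Suc i)" using IH r(2) by simp
        have 2: "b (Suc i) * f (Suc (Suc i)) \<le> (1 - a (Suc i)) * f (Suc (Suc i))"
          using r(4,5) by (intro mult_right_mono) auto
        have 3: "(1 - a (Suc i)) * f (Suc i) < (1 - a (Suc i)) * f (Suc (Suc i))"
        proof -
          have e: "(1 - a (Suc i)) * f (Suc i) = f (Suc i) - a (Suc i) * f (Suc i)"
            "(1 - a (Suc i)) * f (Suc (Suc i)) = f (Suc (Suc i)) - a (Suc i) * f (Suc (Suc i))"
            by (simp_all add: algebra_simps)
          show ?thesis unfolding e using r(1) 1 2 e(2) by linarith
        qed
        show "f (Suc i) < f (Suc (Suc i))"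
        proof -
          have "0 \<le> 1 - a (Suc i)" using r(3,4) by linarith
          from mult_left_less_imp_less[OF 3 this] show ?thesis .
        qed
      qed
    qed
  qed
  thus ?thesis by auto
qed

lemma decr:
  fixes f a b :: "nat \<Rightarrow> real"
  assumes base: "f n < f (n-1)" and n: "n \<ge> 2"
    and rec: "\<forall>i\<in>{2..<n}. f i \<le> a i * f (i-1) + b i * f (Suc i) \<and> b i > 0 \<and> a i \<ge> 0
                \<and> a i + b i \<le> 1 \<and> f (i-1) \<ge> 0"
  shows "\<forall>i\<in>{1..<n}. f (Suc i) < f i"
proof -
  define g where "g k = f (n + 1 - k)" for k
  define a' where "a' k = b (n + 1 - k)" for k
  define b' where "b' k = a (n + 1 - k)" for k
  have "\<forall>k\<in>{1..<n}. g k < g (Suc k)"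
  proof (rule incr[where a=a' and b=b'])
    show "g 1 < g 2" unfolding g_def using base n by (simp add: numeral_2_eq_2)
    show "\<forall>i\<in>{2..<n}. g i \<le> a' i * g (i-1) + b' i * g (Suc i) \<and> a' i > 0 \<and> b' i \<ge> 0
                \<and> a' i + b' i \<le> 1 \<and> g (Suc i) \<ge> 0"
    proof
      fix k assume k: "k \<in> {2..<n}"
      define i where "i = n + 1 - k"
      have i: "i \<in> {2..<n}" "n + 1 - (k - 1) = Suc i" "n + 1 - Suc k = i - 1" using k unfolding i_def by auto
      show "g k \<le> a' k * g (k-1) + b' k * g (Suc k) \<and> a' k > 0 \<and> b' k \<ge> 0
                \<and> a' k + b' k \<le> 1 \<and> g (Suc k) \<ge> 0"
      proof -
        have r: "f i \<le> a i * f (i-1) + b i * f (Suc i)" "b i > 0" "a i \<ge> 0" "a i + b i \<le> 1" "f (i-1) \<ge> 0"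
          using rec i(1) by auto
        have e: "g k = f i" "g (k-1) = f (Suc i)" "g (Suc k) = f (i-1)" "a' k = b i" "b' k = a i"
          unfolding g_def a'_def b'_def i_def using i(2,3) unfolding i_def by auto
        show ?thesis unfolding e using r by (intro conjI; linarith)
      qed
    qed
  qed
  show ?thesis
  proof
    fix i assume i: "i \<in> {1..<n}"
    hence "n - i \<in> {1..<n}" by auto
    hence "g (n - i) < g (Suc (n - i))" using \<open>\<forall>k\<in>{1..<n}. _\<close> by blast
    moreover have "n + 1 - (n - i) = Suc i" "n + 1 - Suc (n - i) = i" using i by auto
    ultimately show "f (Suc i) < f i" unfolding g_def by simp
  qed
qed



lemma sh1: assumes "P \<in> carrier_mat m m" "X1 \<in> carrier_mat m m" "(X2::complex mat) \<in> carrier_mat m m"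
  "P = -(X1 + X2)" shows "X2 = -(X1 + P)"
  using assms by (intro eq_matI) auto

lemma sh2: assumes "P \<in> carrier_mat m m" "X1 \<in> carrier_mat m m" "(X2::complex mat) \<in> carrier_mat m m"
  "P = -(X1 + X2)" shows "X1 = -(P + X2)"
  using assms by (intro eq_matI) auto

lemma sh3: assumes "P \<in> carrier_mat m m" "X1 \<in> carrier_mat m m" "(X2::complex mat) \<in> carrier_mat m m"
  "P = -(X1 + X2)" shows "X1 + X2 + P = 0\<^sub>m m m"
  using assms by (intro eq_matI) auto

lemma recL: assumes Q: "Q \<in> carrier_mat m m" "invertible_mat Q" and Z: "(Z::complex mat) \<in> carrier_mat m m"
  shows "Q * (- (minv Q * Z)) = - Z"
proof -
  have mQ: "minv Q \<in> carrier_mat m m" "Q * minv Q = 1\<^sub>m m" using minv[OF Q] by auto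
  have "Q * (- (minv Q * Z)) = - (Q * (minv Q * Z))" using Q mQ Z by simp
  also have "Q * (minv Q * Z) = (Q * minv Q) * Z" using Q mQ Z by (simp add: assoc_mult_mat[symmetric])
  finally show ?thesis using mQ Z by simp
qed

lemma recR: assumes Q: "Q \<in> carrier_mat m m" "invertible_mat Q" and Z: "(Z::complex mat) \<in> carrier_mat m m"
  shows "(- (Z * minv Q)) * Q = - Z"
proof -
  have mQ: "minv Q \<in> carrier_mat m m" "minv Q * Q = 1\<^sub>m m" using minv[OF Q] by auto
  have "(- (Z * minv Q)) * Q = - ((Z * minv Q) * Q)" using Q mQ Z by simp
  also have "(Z * minv Q) * Q = Z * (minv Q * Q)" using Q mQ Z by simp
  finally show ?thesis using mQ Z by simp
qed

locale tri =
  fixes m n :: nat and A B C :: "nat \<Rightarrow> complex mat"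
  assumes m: "m \<ge> 1" and n: "n \<ge> 2"
    and dimA: "\<forall>i \<in> {1..n}. A i \<in> carrier_mat m m"
    and dimB: "\<forall>i \<in> {1..n-1}. B i \<in> carrier_mat m m"
    and dimC: "\<forall>i \<in> {1..n-1}. C i \<in> carrier_mat m m"
    and invB: "\<forall>i \<in> {1..n-1}. invertible_mat (B i)"
    and invC: "\<forall>i \<in> {1..n-1}. invertible_mat (C i)"
    and invA: "\<forall>i \<in> {1..n}. invertible_mat (A i)"
begin

abbreviation "U \<equiv> Useq A B C m"
abbreviation "X \<equiv> Xseq A B C m"

lemma mB: "1 \<le> i \<Longrightarrow> i < n \<Longrightarrow> minv (B i) \<in> carrier_mat m m"
  using minv[of "B i" m] dimB invB by auto
lemma mC: "1 \<le> i \<Longrightarrow> i < n \<Longrightarrow> minv (C i) \<in> carrier_mat m m"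
  using minv[of "C i" m] dimC invC by auto
lemma cA: "1 \<le> i \<Longrightarrow> i \<le> n \<Longrightarrow> A i \<in> carrier_mat m m" using dimA by auto
lemma cB: "1 \<le> i \<Longrightarrow> i < n \<Longrightarrow> B i \<in> carrier_mat m m" using dimB by auto
lemma cC: "1 \<le> i \<Longrightarrow> i < n \<Longrightarrow> C i \<in> carrier_mat m m" using dimC by auto

lemma U_car: "1 \<le> i \<Longrightarrow> i \<le> n \<Longrightarrow> U i \<in> carrier_mat m m"
proof (induction i rule: less_induct)
  case (less i)
  show ?case
  proof (cases i)
    case 0 then show ?thesis using less by simp
  next
    case (Suc j) note j = this
    show ?thesis
    proof (cases j)
      case 0 then show ?thesis using j by simp
    next
      case (Suc k) note k = this
      show ?thesis
      proof (cases k)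
        case 0 then show ?thesis using j k less mB[of 1] cA[of 1] by simp
      next
        case (Suc l)
        have "U (Suc (Suc (Suc l))) = - (minv (B (l+2)) * (C (l+1) * U (l+1) + A (l+2) * U (l+2)))"
          by simp
        moreover have "U (l+1) \<in> carrier_mat m m" "U (l+2) \<in> carrier_mat m m"
          using less j k Suc by auto
        ultimately show ?thesis using j k Suc less mB[of "l+2"] cA[of "l+2"] cC[of "l+1"] by simp
      qed
    qed
  qed
qed

lemma U_rec: assumes i: "i \<in> {2..<n}"
  shows "A i * U i = - (C (i-1) * U (i-1) + B i * U (Suc i))"
proof -
  obtain k where k: "i = k + 2" using i by (metis add.commute atLeastLessThan_iff le_Suc_ex)
  have c: "C (i-1) * U (i-1) \<in> carrier_mat m m" "A i * U i \<in> carrier_mat m m" "B i * U (Suc i) \<in> carrier_mat m m"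
  proof -
    have i1: "1 \<le> i-1" "i-1 < n" "i - 1 \<le> n" using i by auto
    show "C (i-1) * U (i-1) \<in> carrier_mat m m" using cC[OF i1(1,2)] U_car[OF i1(1,3)] by simp
    show "A i * U i \<in> carrier_mat m m" "B i * U (Suc i) \<in> carrier_mat m m"
      using i cA[of i] cB[of i] U_car[of i] U_car[of "Suc i"] by auto
  qed
  have "U (Suc i) = - (minv (B i) * (C (i-1) * U (i-1) + A i * U i))"
    unfolding k by (simp add: numeral_2_eq_2)
  hence "B i * U (Suc i) = - (C (i-1) * U (i-1) + A i * U i)"
    using recL[of "B i" m "C (i-1) * U (i-1) + A i * U i"] i cB[of i] invB c by auto
  thus ?thesis using sh1[OF c(3) c(1) c(2)] by simp
qed

lemma U_base: "A 1 * U 1 = - (0\<^sub>m m m * 0\<^sub>m m m + B 1 * U 2)"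
proof -
  have c: "A 1 * U 1 \<in> carrier_mat m m" "B 1 * U 2 \<in> carrier_mat m m"
    using n cA[of 1] cB[of 1] U_car[of 1] U_car[of 2] by auto
  have "U 2 = - (minv (B 1) * (A 1 * U 1))"
    using cA[of 1] mB[of 1] n by (simp add: numeral_2_eq_2)
  hence "B 1 * U 2 = - (A 1 * U 1)"
    using recL[of "B 1" m "A 1 * U 1"] n cB[of 1] invB c by auto
  thus ?thesis using c by (intro eq_matI) auto
qed

end


lemma sum_split: "(\<Sum>r\<in>{0..<(n::nat)*m}. f r) = (\<Sum>i\<in>{0..<n}. \<Sum>p\<in>{0..<m}. f (i*m+p))"
proof (induction n)
  case 0 then show ?case by simp
next
  case (Suc n)
  have "(\<Sum>r\<in>{0..<Suc n*m}. f r) = (\<Sum>r\<in>{0..<n*m}. f r) + (\<Sum>r\<in>{n*m..<n*m+m}. f r)"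
    by (simp add: sum.atLeastLessThan_concat add.commute)
  also have "(\<Sum>r\<in>{n*m..<n*m+m}. f r) = (\<Sum>p\<in>{0..<m}. f (n*m+p))"
    using sum.shift_bounds_nat_ivl[of f 0 "n*m" m] by (simp add: add.commute)
  finally show ?case using Suc by simp
qed

lemma mult_entry: "(P::complex mat) \<in> carrier_mat m m \<Longrightarrow> Q \<in> carrier_mat m m \<Longrightarrow> k < m \<Longrightarrow> q < m \<Longrightarrow>
   (P * Q) $$ (k,q) = (\<Sum>p\<in>{0..<m}. P $$ (k,p) * Q $$ (p,q))"
  by (simp add: scalar_prod_def)

context tri begin

lemma X_car: "1 \<le> i \<Longrightarrow> i \<le> n \<Longrightarrow> X i \<in> carrier_mat m m"
proof (induction i rule: less_induct)
  case (less i)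
  show ?case
  proof (cases i)
    case 0 then show ?thesis using less by simp
  next
    case (Suc j) note j = this
    show ?thesis
    proof (cases j)
      case 0 then show ?thesis using j by simp
    next
      case (Suc k) note k = this
      show ?thesis
      proof (cases k)
        case 0 then show ?thesis using j k less mC[of 1] cA[of 1] by simp
      next
        case (Suc l)
        have e: "X (Suc (Suc (Suc l))) = - ((X (l+1) * B (l+1) + X (l+2) * A (l+2)) * minv (C (l+2)))"
          by simp
        have x: "X (l+1) \<in> carrier_mat m m" "X (l+2) \<in> carrier_mat m m"
          using less j k Suc by auto
        have y: "minv (C (l+2)) \<in> carrier_mat m m" "A (l+2) \<in> carrier_mat m m"
          using j k Suc less mC[of "l+2"] cA[of "l+2"] by auto
        have z: "X (l+1) * B (l+1) + X (l+2) * A (l+2) \<in> carrier_mat m m"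
          using x y by simp
        have "- ((X (l+1) * B (l+1) + X (l+2) * A (l+2)) * minv (C (l+2))) \<in> carrier_mat m m"
          using z y by simp
        then show ?thesis using e j k Suc by simp
      qed
    qed
  qed
qed

lemma X_col1: "X 1 * A 1 + X 2 * C 1 = 0\<^sub>m m m"
proof -
  have c: "X 1 * A 1 \<in> carrier_mat m m" "X 2 * C 1 \<in> carrier_mat m m"
    using n cA[of 1] cC[of 1] X_car[of 1] X_car[of 2] by auto
  have "X 2 = - ((X 1 * A 1) * minv (C 1))"
    by (simp add: numeral_2_eq_2)
  hence "X 2 * C 1 = - (X 1 * A 1)"
    using recR[of "C 1" m "X 1 * A 1"] n cC[of 1] invC c by auto
  thus ?thesis using c by (intro eq_matI) auto
qed

lemma X_col: assumes j: "j \<in> {2..<n}"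
  shows "X (j-1) * B (j-1) + X j * A j + X (Suc j) * C j = 0\<^sub>m m m"
proof -
  obtain k where k: "j = k + 2" using j by (metis add.commute atLeastLessThan_iff le_Suc_ex)
  have c: "X (j-1) * B (j-1) \<in> carrier_mat m m" "X j * A j \<in> carrier_mat m m" "X (Suc j) * C j \<in> carrier_mat m m"
  proof -
    have i1: "1 \<le> j-1" "j-1 < n" "j - 1 \<le> n" using j by auto
    show "X (j-1) * B (j-1) \<in> carrier_mat m m" using cB[OF i1(1,2)] X_car[OF i1(1,3)] by simp
    show "X j * A j \<in> carrier_mat m m" "X (Suc j) * C j \<in> carrier_mat m m"
      using j cA[of j] cC[of j] X_car[of j] X_car[of "Suc j"] by auto
  qed
  have "X (Suc j) = - ((X (j-1) * B (j-1) + X j * A j) * minv (C j))"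
    unfolding k by (simp add: numeral_2_eq_2)
  hence "X (Suc j) * C j = - (X (j-1) * B (j-1) + X j * A j)"
    using recR[of "C j" m "X (j-1) * B (j-1) + X j * A j"] j cC[of j] invC c by auto
  thus ?thesis using sh3[OF c(3) c(1) c(2)] by simp
qed

end


lemma add3_entry: "(P::complex mat) \<in> carrier_mat m m \<Longrightarrow> Q \<in> carrier_mat m m \<Longrightarrow> R \<in> carrier_mat m m
  \<Longrightarrow> k < m \<Longrightarrow> q < m \<Longrightarrow> (P + Q + R) $$ (k,q) = P $$ (k,q) + Q $$ (k,q) + R $$ (k,q)"
  by simp

context tri begin

abbreviation "blk \<equiv> tridiag_blocks m A B C"
abbreviation "S \<equiv> X n * A n + X (n-1) * B (n-1)"

lemma blk_car: "i \<in> {1..n} \<Longrightarrow> j \<in> {1..n} \<Longrightarrow> blk i j \<in> carrier_mat m m"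
  unfolding tridiag_blocks_def using cA cB cC by auto

lemma blk_zero: "i \<noteq> j \<Longrightarrow> j \<noteq> i + 1 \<Longrightarrow> i \<noteq> j + 1 \<Longrightarrow> blk i j = 0\<^sub>m m m"
  unfolding tridiag_blocks_def by auto

lemma S_car: "S \<in> carrier_mat m m"
proof -
  have n1: "1 \<le> n-1" "n-1 < n" "n-1 \<le> n" "1 \<le> n" using n by auto
  show ?thesis using cA[OF n1(4)] cB[OF n1(1,2)] X_car[OF n1(4) order_refl] X_car[OF n1(1,3)] by auto
qed

lemma colK: assumes j: "j \<in> {1..n}" and kq: "k < m" "q < m"
  shows "(\<Sum>i\<in>{1..n}. (X i * blk i j) $$ (k,q)) = (if j = n then S $$ (k,q) else 0)"
proof -
  let ?g = "\<lambda>i. (X i * blk i j) $$ (k,q)"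
  have zero: "?g i = 0" if "i \<in> {1..n}" "i \<noteq> j" "j \<noteq> i + 1" "i \<noteq> j + 1" for i
  proof -
    have "X i * blk i j = 0\<^sub>m m m" using blk_zero[OF that(2-4)] X_car[of i] that(1) by auto
    thus ?thesis using kq by simp
  qed
  show ?thesis
  proof (cases "j = 1")
    case True
    have "(\<Sum>i\<in>{1..n}. ?g i) = (\<Sum>i\<in>{1,2}. ?g i)"
      by (rule sum.mono_neutral_right) (use n True zero in \<open>auto simp: numeral_2_eq_2\<close>)
    also have "\<dots> = ((X 1 * A 1) + (X 2 * C 1)) $$ (k,q)"
      using True kq n cA[of 1] cC[of 1] X_car[of 1] X_car[of 2] by (simp add: tridiag_blocks_def)
    also have "\<dots> = 0" using X_col1 kq by simp
    finally show ?thesis using True n by simp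
  next
    case False
    show ?thesis
    proof (cases "j = n")
      case True
      have n1: "1 \<le> n-1" "n-1 < n" "n-1 \<le> n" "1 \<le> n" "n - 1 \<noteq> n" "n - Suc 0 \<noteq> n" using n by auto
      have z: "\<forall>i\<in>{1..n}-{n-1,n}. ?g i = 0"
      proof
        fix i assume i: "i \<in> {1..n}-{n-1,n}"
        hence "i \<noteq> j" "j \<noteq> i + 1" "i \<noteq> j + 1" using True by auto
        thus "?g i = 0" using zero i by auto
      qed
      have "(\<Sum>i\<in>{1..n}. ?g i) = (\<Sum>i\<in>{n-1,n}. ?g i)"
        by (rule sum.mono_neutral_right) (use n z in auto)
      also have "\<dots> = ((X (n-1) * B (n-1)) + (X n * A n)) $$ (k,q)"
        using True kq n n1(5,6) cA[OF n1(4)] cB[OF n1(1,2)] X_car[OF n1(4) order_refl] X_car[OF n1(1,3)]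
        by (simp add: tridiag_blocks_def)
      also have "\<dots> = S $$ (k,q)"
        using kq cA[OF n1(4)] cB[OF n1(1,2)] X_car[OF n1(4) order_refl] X_car[OF n1(1,3)] by simp
      finally show ?thesis using True by simp
    next
      case False2: False
      have j2: "j \<in> {2..<n}" using j False False2 by auto
      have i1: "1 \<le> j-1" "j-1 < n" "j - 1 \<le> n" using j2 by auto
      have c: "X (j-1) * B (j-1) \<in> carrier_mat m m" "X j * A j \<in> carrier_mat m m"
          "X (Suc j) * C j \<in> carrier_mat m m"
        using cB[OF i1(1,2)] X_car[OF i1(1,3)] j2 cA[of j] cC[of j] X_car[of j] X_car[of "Suc j"] by auto
      have b: "blk (j-1) j = B (j-1)" "blk j j = A j" "blk (Suc j) j = C j"
        using j2 by (auto simp: tridiag_blocks_def)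
      have d: "j - 1 \<noteq> j" "j - 1 \<noteq> Suc j" "j \<noteq> Suc j" using j2 by auto
      have "(\<Sum>i\<in>{j-1,j,Suc j}. ?g i) = ?g (j-1) + ?g j + ?g (Suc j)"
        using d by (simp add: add.assoc)
      also have "\<dots> = (X (j-1) * B (j-1)) $$ (k,q) + (X j * A j) $$ (k,q) + (X (Suc j) * C j) $$ (k,q)"
        by (simp only: b)
      also have "\<dots> = (X (j-1) * B (j-1) + X j * A j + X (Suc j) * C j) $$ (k,q)"
        by (rule add3_entry[OF c kq, symmetric])
      also have "\<dots> = 0" unfolding X_col[OF j2] using kq by simp
      finally have s4: "(\<Sum>i\<in>{j-1,j,Suc j}. ?g i) = 0" .
      have "(\<Sum>i\<in>{1..n}. ?g i) = (\<Sum>i\<in>{j-1,j,Suc j}. ?g i)"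
      proof (rule sum.mono_neutral_right)
        show "\<forall>i\<in>{1..n}-{j-1,j,Suc j}. ?g i = 0"
        proof
          fix i assume i: "i \<in> {1..n}-{j-1,j,Suc j}"
          hence "i \<noteq> j" "j \<noteq> i + 1" "i \<noteq> j + 1" using j2 by auto
          thus "?g i = 0" using zero i by auto
        qed
      qed (use j2 in auto)
      thus ?thesis using s4 False2 by simp
    qed
  qed
qed

end


lemma tmv_entry: "(Q::complex mat) \<in> carrier_mat m m \<Longrightarrow> v \<in> carrier_vec m \<Longrightarrow> q < m \<Longrightarrow>
   (transpose_mat Q *\<^sub>v v) $ q = (\<Sum>k\<in>{0..<m}. v $ k * Q $$ (k,q))"
  by (simp add: scalar_prod_def mult.commute)

context tri begin

lemma S_inv: assumes nonsing: "invertible_mat (block_mat n m blk)"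
  shows "invertible_mat S"
proof (rule ccontr)
  assume ninv0: "\<not> invertible_mat S"
  define SS where "SS = S"
  have ninv: "\<not> invertible_mat SS" and S_car: "SS \<in> carrier_mat m m" and
    colK: "\<And>j k q. j \<in> {1..n} \<Longrightarrow> k < m \<Longrightarrow> q < m \<Longrightarrow>
      (\<Sum>i\<in>{1..n}. (X i * blk i j) $$ (k,q)) = (if j = n then SS $$ (k,q) else 0)"
    using ninv0 S_car colK unfolding SS_def by auto
  let ?M = "block_mat n m blk"
  have Mc: "?M \<in> carrier_mat (n*m) (n*m)" unfolding block_mat_def by simp
  have "det SS = 0" using det_inv[OF S_car] ninv by blast
  hence "det (transpose_mat SS) = 0" using det_transpose[OF S_car] by simp
  then obtain v where v: "v \<in> carrier_vec m" "v \<noteq> 0\<^sub>v m" "transpose_mat SS *\<^sub>v v = 0\<^sub>v m"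
    using det_0_iff_vec_prod_zero[of "transpose_mat SS" m] S_car by auto
  have hv: "(\<Sum>k\<in>{0..<m}. v $ k * SS $$ (k,q)) = 0" if q: "q < m" for q
  proof -
    have "(transpose_mat SS *\<^sub>v v) $ q = 0" using v(3) q by simp
    thus ?thesis using tmv_entry[OF S_car v(1) q] by simp
  qed
  define w where "w = vec (n*m) (\<lambda>r. \<Sum>k\<in>{0..<m}. v $ k * X (r div m + 1) $$ (k, r mod m))"
  have mpos: "m > 0" using m by simp
  have wz: "transpose_mat ?M *\<^sub>v w = 0\<^sub>v (n*m)"
  proof (rule eq_vecI)
    fix c assume "c < dim_vec (0\<^sub>v (n*m) :: complex vec)"
    hence c: "c < n*m" by simp
    define j where "j = c div m + 1"
    define q where "q = c mod m"
    have jq: "j \<in> {1..n}" "q < m" unfolding j_def q_def using c mpos less_mult_imp_div_less[of c n m]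
      by auto
    have "(transpose_mat ?M *\<^sub>v w) $ c = (\<Sum>r\<in>{0..<n*m}. ?M $$ (r,c) * w $ r)"
      using c Mc unfolding w_def by (simp add: scalar_prod_def)
    also have "\<dots> = (\<Sum>i\<in>{0..<n}. \<Sum>p\<in>{0..<m}. ?M $$ (i*m+p,c) * w $ (i*m+p))"
      by (rule sum_split)
    also have "\<dots> = (\<Sum>i\<in>{0..<n}. \<Sum>p\<in>{0..<m}. blk (i+1) j $$ (p,q) *
                       (\<Sum>k\<in>{0..<m}. v $ k * X (i+1) $$ (k, p)))"
    proof (intro sum.cong refl)
      fix i p assume i: "i \<in> {0..<n}" and p: "p \<in> {0..<m}"
      have r: "i*m+p < n*m"
      proof -
        have "i*m+p < i*m+m" using p by simp
        also have "\<dots> = Suc i * m" by simp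
        also have "\<dots> \<le> n*m" using i by (intro mult_right_mono) auto
        finally show ?thesis .
      qed
      have dm: "(i*m+p) div m = i" "(i*m+p) mod m = p" using p mpos by auto
      show "?M $$ (i*m+p,c) * w $ (i*m+p) = blk (i+1) j $$ (p,q) *
                       (\<Sum>k\<in>{0..<m}. v $ k * X (i+1) $$ (k, p))"
        using r c dm unfolding block_mat_def w_def j_def q_def by simp
    qed
    also have "\<dots> = (\<Sum>k\<in>{0..<m}. v $ k * (\<Sum>i\<in>{0..<n}. \<Sum>p\<in>{0..<m}. X (i+1) $$ (k,p) * blk (i+1) j $$ (p,q)))"
    proof -
      let ?F = "\<lambda>i p k. v $ k * (X (i+1) $$ (k,p) * blk (i+1) j $$ (p,q))"
      have e1: "\<And>i p. blk (i+1) j $$ (p,q) * (\<Sum>k\<in>{0..<m}. v $ k * X (i+1) $$ (k, p)) = (\<Sum>k\<in>{0..<m}. ?F i p k)"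
        by (simp add: sum_distrib_left mult_ac)
      have "(\<Sum>i\<in>{0..<n}. \<Sum>p\<in>{0..<m}. blk (i+1) j $$ (p,q) * (\<Sum>k\<in>{0..<m}. v $ k * X (i+1) $$ (k, p)))
          = (\<Sum>i\<in>{0..<n}. \<Sum>p\<in>{0..<m}. \<Sum>k\<in>{0..<m}. ?F i p k)"
        by (simp only: e1)
      also have "\<dots> = (\<Sum>i\<in>{0..<n}. \<Sum>k\<in>{0..<m}. \<Sum>p\<in>{0..<m}. ?F i p k)"
        by (rule sum.cong[OF refl], rule sum.swap)
      also have "\<dots> = (\<Sum>k\<in>{0..<m}. \<Sum>i\<in>{0..<n}. \<Sum>p\<in>{0..<m}. ?F i p k)"
        by (rule sum.swap)
      also have "\<dots> = (\<Sum>k\<in>{0..<m}. v $ k * (\<Sum>i\<in>{0..<n}. \<Sum>p\<in>{0..<m}. X (i+1) $$ (k,p) * blk (i+1) j $$ (p,q)))"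
        by (simp only: sum_distrib_left)
      finally show ?thesis .
    qed
    also have "\<dots> = (\<Sum>k\<in>{0..<m}. v $ k * (\<Sum>i\<in>{0..<n}. (X (i+1) * blk (i+1) j) $$ (k,q)))"
    proof (intro sum.cong refl arg_cong2[where f="(*)"])
      fix k i assume k: "k \<in> {0..<m}" and i: "i \<in> {0..<n}"
      have "X (i+1) \<in> carrier_mat m m" "blk (i+1) j \<in> carrier_mat m m"
        using X_car[of "i+1"] blk_car[of "i+1" j] i jq by auto
      thus "(\<Sum>p\<in>{0..<m}. X (i+1) $$ (k,p) * blk (i+1) j $$ (p,q)) = (X (i+1) * blk (i+1) j) $$ (k,q)"
        using mult_entry k jq by auto
    qed
    also have "\<dots> = (\<Sum>k\<in>{0..<m}. v $ k * (\<Sum>i\<in>{1..n}. (X i * blk i j) $$ (k,q)))"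
    proof -
      have sh: "\<And>k. (\<Sum>i\<in>{0..<n}. (X (i+1) * blk (i+1) j) $$ (k,q)) = (\<Sum>i\<in>{1..n}. (X i * blk i j) $$ (k,q))"
      proof -
        fix k
        show "(\<Sum>i\<in>{0..<n}. (X (i+1) * blk (i+1) j) $$ (k,q)) = (\<Sum>i\<in>{1..n}. (X i * blk i j) $$ (k,q))"
          using sum.shift_bounds_nat_ivl[of "\<lambda>i. (X i * blk i j) $$ (k,q)" 0 1 n]
          by (simp add: atLeastLessThanSuc_atLeastAtMost)
      qed
      show ?thesis by (simp only: sh)
    qed
    also have "\<dots> = (\<Sum>k\<in>{0..<m}. v $ k * (if j = n then SS $$ (k,q) else 0))"
      using colK[OF jq(1) _ jq(2)] by (intro sum.cong refl) auto
    also have "\<dots> = 0" using hv[OF jq(2)] by (cases "j = n") auto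
    finally show "(transpose_mat ?M *\<^sub>v w) $ c = 0\<^sub>v (n*m) $ c" using c by simp
  qed (use Mc w_def in simp)
  have wnz: "w \<noteq> 0\<^sub>v (n*m)"
  proof
    assume w0: "w = 0\<^sub>v (n*m)"
    have "\<exists>p<m. v $ p \<noteq> 0"
    proof (rule ccontr)
      assume "\<not> (\<exists>p<m. v $ p \<noteq> 0)"
      hence "v = 0\<^sub>v m" using v(1) by (intro eq_vecI) auto
      thus False using v(2) by simp
    qed
    then obtain p where p: "p < m" "v $ p \<noteq> 0" by blast
    have "m \<le> n*m" using n by simp
    hence pn: "p < n*m" using p by linarith
    have "w $ p = (\<Sum>k\<in>{0..<m}. v $ k * X 1 $$ (k, p))" using pn p unfolding w_def by simp
    also have "\<dots> = (\<Sum>k\<in>{0..<m}. if k = p then v $ k else 0)"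
      using p by (intro sum.cong refl) auto
    also have "\<dots> = v $ p" using p by simp
    finally show False using w0 p pn by simp
  qed
  have "det (transpose_mat ?M) = 0"
  proof -
    have wc: "w \<in> carrier_vec (n*m)" unfolding w_def by simp
    have "\<exists>v. v \<in> carrier_vec (n*m) \<and> v \<noteq> 0\<^sub>v (n*m) \<and> transpose_mat ?M *\<^sub>v v = 0\<^sub>v (n*m)"
      using wc wnz wz by blast
    thus ?thesis using det_0_iff_vec_prod_zero[of "transpose_mat ?M" "n*m"] Mc by simp
  qed
  hence "det ?M = 0" using det_transpose[OF Mc] by simp
  thus False using inv_det[OF Mc nonsing] by simp
qed

end


lemma minv_ne0: assumes "(P::complex mat) \<in> carrier_mat m m" "invertible_mat P" "m \<ge> 1"
  shows "minv P \<noteq> 0\<^sub>m m m"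
proof
  assume z: "minv P = 0\<^sub>m m m"
  have "P * minv P = 1\<^sub>m m" using minv[OF assms(1,2)] by simp
  hence "1\<^sub>m m = P * 0\<^sub>m m m" unfolding z by simp
  also have "\<dots> = 0\<^sub>m m m" using assms(1) by simp
  finally show False using one_ne_zero_mat[OF assms(3)] by simp
qed

context tri begin

abbreviation "Yb \<equiv> Ybw A B C m n"
abbreviation "Y \<equiv> Yseq A B C m n"

lemma Ybw_car: assumes Sinv: "invertible_mat S" shows "k < n \<Longrightarrow> Yb k \<in> carrier_mat m m"
proof (induction k rule: less_induct)
  case (less k)
  have Y0: "Yb 0 \<in> carrier_mat m m" using minv[OF S_car Sinv] by simp
  have n1: "1 \<le> n-1" "n-1 < n" "1 \<le> n" using n by auto
  have Y1: "Yb 1 \<in> carrier_mat m m"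
  proof -
    have "Yb 1 = - (minv (C (n-1)) * A n * Yb 0)" by simp
    thus ?thesis using Y0 mC[OF n1(1,2)] cA[OF n1(3) order_refl] by simp
  qed
  show ?case
  proof (cases k)
    case 0 then show ?thesis using Y0 by simp
  next
    case (Suc j) note j = this
    show ?thesis
    proof (cases j)
      case 0 then show ?thesis using j Y1 by simp
    next
      case (Suc l)
      have e: "Yb (Suc (Suc l)) = - (minv (C (n-l-2)) * (A (n-l-1) * Yb (Suc l) + B (n-l-1) * Yb l))"
        by simp
      have i: "1 \<le> n-l-2" "n-l-2 < n" "1 \<le> n-l-1" "n-l-1 \<le> n" "n-l-1 < n" using less j Suc by auto
      have y: "Yb (Suc l) \<in> carrier_mat m m" "Yb l \<in> carrier_mat m m" using less j Suc by auto
      have z: "A (n-l-1) * Yb (Suc l) + B (n-l-1) * Yb l \<in> carrier_mat m m"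
        using y cA[OF i(3,4)] cB[OF i(3,5)] by simp
      have "- (minv (C (n-l-2)) * (A (n-l-1) * Yb (Suc l) + B (n-l-1) * Yb l)) \<in> carrier_mat m m"
        using z mC[OF i(1,2)] by simp
      then show ?thesis using e j Suc by simp
    qed
  qed
qed

lemma Y_car: "invertible_mat S \<Longrightarrow> 1 \<le> i \<Longrightarrow> i \<le> n \<Longrightarrow> Y i \<in> carrier_mat m m"
  unfolding Yseq_def by (rule Ybw_car) auto

lemma Y_rec: assumes Sinv: "invertible_mat S" and j: "j \<in> {2..<n}"
  shows "A j * Y j = - (C (j-1) * Y (j-1) + B j * Y (Suc j))"
proof -
  define k where "k = n - j - 1"
  have kk: "n - (j-1) = Suc (Suc k)" "n - k - 2 = j - 1" "n - k - 1 = j" "Suc k = n - j" "k = n - Suc j"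
    using j unfolding k_def by auto
  have i1: "1 \<le> j-1" "j-1 < n" "j - 1 \<le> n" using j by auto
  have c: "C (j-1) * Y (j-1) \<in> carrier_mat m m" "A j * Y j \<in> carrier_mat m m" "B j * Y (Suc j) \<in> carrier_mat m m"
    using cC[OF i1(1,2)] Y_car[OF Sinv i1(1,3)] j cA[of j] cB[of j] Y_car[OF Sinv, of j] Y_car[OF Sinv, of "Suc j"] by auto
  have "Y (j-1) = Yb (Suc (Suc k))" unfolding Yseq_def kk(1) ..
  also have "\<dots> = - (minv (C (n-k-2)) * (A (n-k-1) * Yb (Suc k) + B (n-k-1) * Yb k))" by simp
  also have "\<dots> = - (minv (C (j-1)) * (A j * Y j + B j * Y (Suc j)))"
  proof -
    have yy: "Y j = Yb (Suc k)" "Y (Suc j) = Yb k" unfolding Yseq_def using kk(4,5) by auto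
    show ?thesis unfolding yy kk(2,3) ..
  qed
  finally have "C (j-1) * Y (j-1) = - (A j * Y j + B j * Y (Suc j))"
    using recL[of "C (j-1)" m "A j * Y j + B j * Y (Suc j)"] cC[OF i1(1,2)] invC i1 c by auto
  thus ?thesis using sh2[OF c(1) c(2) c(3)] by simp
qed

lemma Y_base: assumes Sinv: "invertible_mat S"
  shows "A n * Y n = - (C (n-1) * Y (n-1) + 0\<^sub>m m m * 0\<^sub>m m m)"
proof -
  have n1: "1 \<le> n-1" "n-1 < n" "1 \<le> n" "n - 1 \<le> n" "n - (n-1) = 1" using n by auto
  have c: "A n * Y n \<in> carrier_mat m m" "C (n-1) * Y (n-1) \<in> carrier_mat m m" "Y n \<in> carrier_mat m m"
    using cA[OF n1(3) order_refl] cC[OF n1(1,2)] Y_car[OF Sinv n1(3) order_refl] Y_car[OF Sinv n1(1,4)] by auto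
  have "Y (n-1) = - (minv (C (n-1)) * A n * Y n)" unfolding Yseq_def n1(5) by simp
  also have "minv (C (n-1)) * A n * Y n = minv (C (n-1)) * (A n * Y n)"
    using mC[OF n1(1,2)] cA[OF n1(3) order_refl] c(3) by simp
  finally have "C (n-1) * Y (n-1) = - (A n * Y n)"
    using recL[of "C (n-1)" m "A n * Y n"] cC[OF n1(1,2)] invC n1 c by auto
  thus ?thesis using c by (intro eq_matI) auto
qed

lemma Yn_ne0: assumes Sinv: "invertible_mat S" shows "Y n \<noteq> 0\<^sub>m m m"
proof
  assume "Y n = 0\<^sub>m m m"
  hence "minv S = 0\<^sub>m m m" unfolding Yseq_def by simp
  thus False using minv_ne0[OF S_car Sinv m] by simp
qed

lemma pos_prod: assumes "1 \<le> i" "i \<le> n" "Q \<in> carrier_mat m m" "invertible_mat Q" "submult_mat_norm m N"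
  shows "N (minv (A i) * Q) > 0"
proof -
  have mA: "minv (A i) \<in> carrier_mat m m" "A i * minv (A i) = 1\<^sub>m m"
    using minv[of "A i" m] cA[OF assms(1,2)] invA assms(1,2) by auto
  have "minv (A i) * Q \<noteq> 0\<^sub>m m m"
  proof
    assume z: "minv (A i) * Q = 0\<^sub>m m m"
    have "A i * (minv (A i) * Q) = (A i * minv (A i)) * Q"
      using assoc_mult_mat[OF cA[OF assms(1,2)] mA(1) assms(3)] by simp
    hence "Q = A i * (minv (A i) * Q)" unfolding mA(2) using assms(3) by simp
    also have "\<dots> = 0\<^sub>m m m" unfolding z using cA[OF assms(1,2)] by simp
    finally show False using inv_ne0[OF assms(3,4) m] by simp
  qed
  thus ?thesis using Npos[OF assms(5)] mA assms(3) by simp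
qed

lemma rb_bound: assumes rbdd: "row_block_diag_dom n N blk" and norm: "submult_mat_norm m N"
  and i: "i \<in> {2..<n}"
  shows "N (minv (A i) * C (i-1)) + N (minv (A i) * B i) \<le> 1"
proof -
  let ?h = "\<lambda>j. N (minv (blk i i) * blk i j)"
  have mA: "minv (A i) \<in> carrier_mat m m" using minv[of "A i" m] cA[of i] invA i by auto
  have bii: "blk i i = A i" unfolding tridiag_blocks_def by simp
  have le: "(\<Sum>j\<in>{1..n}-{i}. ?h j) \<le> 1" using rbdd i unfolding row_block_diag_dom_def by auto
  have z: "\<forall>j\<in>({1..n}-{i})-{i-1,i+1}. ?h j = 0"
  proof
    fix j assume j: "j \<in> ({1..n}-{i})-{i-1,i+1}"
    hence "blk i j = 0\<^sub>m m m" using i by (intro blk_zero) auto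
    thus "?h j = 0" unfolding bii using mA N0[OF norm] by simp
  qed
  have "(\<Sum>j\<in>{1..n}-{i}. ?h j) = (\<Sum>j\<in>{i-1,i+1}. ?h j)"
    by (rule sum.mono_neutral_right) (use i z in auto)
  also have "\<dots> = ?h (i-1) + ?h (i+1)" using i by simp
  also have "?h (i-1) = N (minv (A i) * C (i-1))"
  proof -
    have "blk i (i-1) = C (i-1)" using i unfolding tridiag_blocks_def by auto
    thus ?thesis unfolding bii by simp
  qed
  also have "?h (i+1) = N (minv (A i) * B i)" unfolding bii tridiag_blocks_def by simp
  finally show ?thesis using le by simp
qed

end


theorem lemma2p3:
  fixes m n :: nat and N :: "complex mat \<Rightarrow> real"
    and A B C :: "nat \<Rightarrow> complex mat"
  assumes "m \<ge> 1" and "n \<ge> 2"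
    and norm: "submult_mat_norm m N"
    and dimA: "\<forall>i \<in> {1..n}. A i \<in> carrier_mat m m"
    and dimB: "\<forall>i \<in> {1..n-1}. B i \<in> carrier_mat m m"
    and dimC: "\<forall>i \<in> {1..n-1}. C i \<in> carrier_mat m m"
    and nonsing: "invertible_mat (block_mat n m (tridiag_blocks m A B C))"
    and invB: "\<forall>i \<in> {1..n-1}. invertible_mat (B i)"
    and invC: "\<forall>i \<in> {1..n-1}. invertible_mat (C i)"
    and rbdd: "row_block_diag_dom n N (tridiag_blocks m A B C)"
    and first: "N (minv (A 1) * B 1) < 1"
    and last: "N (minv (A n) * C (n-1)) < 1"
  shows "(\<forall>i \<in> {1..<n}. N (Useq A B C m i) < N (Useq A B C m (Suc i))) \<and>
         (\<forall>i \<in> {1..<n}. N (Yseq A B C m n i) > N (Yseq A B C m n (Suc i)))"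
proof -
  have invA: "\<forall>i \<in> {1..n}. invertible_mat (A i)"
    using rbdd unfolding row_block_diag_dom_def tridiag_blocks_def by auto
  interpret tri m n A B C
    using assms invA by unfold_locales auto
  have mA: "\<And>i. i \<in> {1..n} \<Longrightarrow> minv (A i) \<in> carrier_mat m m"
    using minv dimA invA by blast
  have Sinv: "invertible_mat S" using S_inv nonsing by simp
  have Z: "N (minv (A i) * 0\<^sub>m m m) = 0" if "i \<in> {1..n}" for i
    using mA[OF that] N0[OF norm] by simp
  have Zc: "0\<^sub>m m m \<in> carrier_mat m m" by simp
  have n1: "1 \<le> n-1" "n-1 < n" "1 \<le> n" "n-1 \<le> n" "1 < n" "2 \<le> n" using \<open>n \<ge> 2\<close> by auto
  have u2c: "U 2 \<in> carrier_mat m m" using U_car[of 2] n1 by simp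
  have partU: "\<forall>i \<in> {1..<n}. N (U i) < N (U (Suc i))"
  proof (rule incr[where a="\<lambda>i. N (minv (A i) * C (i-1))" and b="\<lambda>i. N (minv (A i) * B i)"])
    have rb: "N (U 1) \<le> N (minv (A 1) * 0\<^sub>m m m) * N (0\<^sub>m m m) + N (minv (A 1) * B 1) * N (U 2)"
      by (rule row_bound[OF norm cA[OF order_refl n1(3)] cB[OF order_refl n1(5)] Zc
            U_car[OF order_refl n1(3)] Zc u2c _ U_base])
        (use invA n1 in auto)
    hence rb': "N (U 1) \<le> N (minv (A 1) * B 1) * N (U 2)" using Z[of 1] n1 N0[OF norm] by simp
    have p1: "N (U 1) > 0" using Npos[OF norm, of "1\<^sub>m m"] one_ne_zero_mat[OF \<open>m \<ge> 1\<close>] by simp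
    have b0: "N (minv (A 1) * B 1) \<ge> 0" using Nge0[OF norm] mA[of 1] cB[OF order_refl n1(5)] n1 by simp
    have u2: "N (U 2) \<ge> 0" using Nge0[OF norm] u2c by simp
    have "N (U 2) > 0"
    proof (rule ccontr)
      assume "\<not> N (U 2) > 0" hence "N (U 2) = 0" using u2 by simp
      thus False using rb' p1 by simp
    qed
    hence "N (minv (A 1) * B 1) * N (U 2) < N (U 2)" using first by simp
    thus "N (U 1) < N (U 2)" using rb' by linarith
  next
    show "\<forall>i\<in>{2..<n}. N (U i) \<le> N (minv (A i) * C (i-1)) * N (U (i-1)) + N (minv (A i) * B i) * N (U (Suc i))
        \<and> N (minv (A i) * C (i-1)) > 0 \<and> N (minv (A i) * B i) \<ge> 0
        \<and> N (minv (A i) * C (i-1)) + N (minv (A i) * B i) \<le> 1 \<and> N (U (Suc i)) \<ge> 0"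
    proof
      fix i assume i: "i \<in> {2..<n}"
      have ii: "1 \<le> i" "i \<le> n" "i < n" "1 \<le> i-1" "i-1 < n" "i-1 \<le> n" "Suc i \<le> n" "1 \<le> Suc i" using i by auto
      have r: "N (U i) \<le> N (minv (A i) * C (i-1)) * N (U (i-1)) + N (minv (A i) * B i) * N (U (Suc i))"
        by (rule row_bound[OF norm cA[OF ii(1,2)] cB[OF ii(1,3)] cC[OF ii(4,5)]
            U_car[OF ii(1,2)] U_car[OF ii(4,6)] U_car[OF ii(8,7)] _ U_rec[OF i]])
          (use invA ii in auto)
      have p: "N (minv (A i) * C (i-1)) > 0"
        using pos_prod[OF ii(1,2) cC[OF ii(4,5)] _ norm] invC ii by auto
      have b0: "N (minv (A i) * B i) \<ge> 0" using Nge0[OF norm] mA[of i] cB[OF ii(1,3)] ii by simp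
      have f0: "N (U (Suc i)) \<ge> 0" using Nge0[OF norm] U_car[OF ii(8,7)] by simp
      show "N (U i) \<le> N (minv (A i) * C (i-1)) * N (U (i-1)) + N (minv (A i) * B i) * N (U (Suc i))
        \<and> N (minv (A i) * C (i-1)) > 0 \<and> N (minv (A i) * B i) \<ge> 0
        \<and> N (minv (A i) * C (i-1)) + N (minv (A i) * B i) \<le> 1 \<and> N (U (Suc i)) \<ge> 0"
        using r p b0 f0 rb_bound[OF rbdd norm i] by auto
    qed
  qed
  have partY: "\<forall>i \<in> {1..<n}. N (Y (Suc i)) < N (Y i)"
  proof (rule decr[where a="\<lambda>i. N (minv (A i) * C (i-1))" and b="\<lambda>i. N (minv (A i) * B i)"])
    show "2 \<le> n" by (rule n1(6))
    have rb: "N (Y n) \<le> N (minv (A n) * C (n-1)) * N (Y (n-1)) + N (minv (A n) * 0\<^sub>m m m) * N (0\<^sub>m m m)"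
      by (rule row_bound[OF norm cA[OF n1(3) order_refl] Zc cC[OF n1(1,2)]
            Y_car[OF Sinv n1(3) order_refl] Y_car[OF Sinv n1(1,4)] Zc _ Y_base[OF Sinv]])
        (use invA n1 in auto)
    hence rb': "N (Y n) \<le> N (minv (A n) * C (n-1)) * N (Y (n-1))" using Z[of n] n1 N0[OF norm] by simp
    have p1: "N (Y n) > 0" using Npos[OF norm Y_car[OF Sinv n1(3) order_refl] Yn_ne0[OF Sinv]] .
    have u2: "N (Y (n-1)) \<ge> 0" using Nge0[OF norm] Y_car[OF Sinv n1(1,4)] by simp
    have "N (Y (n-1)) > 0"
    proof (rule ccontr)
      assume "\<not> N (Y (n-1)) > 0" hence "N (Y (n-1)) = 0" using u2 by simp
      thus False using rb' p1 by simp
    qed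
    hence "N (minv (A n) * C (n-1)) * N (Y (n-1)) < N (Y (n-1))" using last by simp
    thus "N (Y n) < N (Y (n-1))" using rb' by linarith
  next
    show "\<forall>i\<in>{2..<n}. N (Y i) \<le> N (minv (A i) * C (i-1)) * N (Y (i-1)) + N (minv (A i) * B i) * N (Y (Suc i))
        \<and> N (minv (A i) * B i) > 0 \<and> N (minv (A i) * C (i-1)) \<ge> 0
        \<and> N (minv (A i) * C (i-1)) + N (minv (A i) * B i) \<le> 1 \<and> N (Y (i-1)) \<ge> 0"
    proof
      fix i assume i: "i \<in> {2..<n}"
      have ii: "1 \<le> i" "i \<le> n" "i < n" "1 \<le> i-1" "i-1 < n" "i-1 \<le> n" "Suc i \<le> n" "1 \<le> Suc i" using i by auto
      have r: "N (Y i) \<le> N (minv (A i) * C (i-1)) * N (Y (i-1)) + N (minv (A i) * B i) * N (Y (Suc i))"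
        by (rule row_bound[OF norm cA[OF ii(1,2)] cB[OF ii(1,3)] cC[OF ii(4,5)]
            Y_car[OF Sinv ii(1,2)] Y_car[OF Sinv ii(4,6)] Y_car[OF Sinv ii(8,7)] _ Y_rec[OF Sinv i]])
          (use invA ii in auto)
      have p: "N (minv (A i) * B i) > 0"
        using pos_prod[OF ii(1,2) cB[OF ii(1,3)] _ norm] invB ii by auto
      have b0: "N (minv (A i) * C (i-1)) \<ge> 0" using Nge0[OF norm] mA[of i] cC[OF ii(4,5)] ii by simp
      have f0: "N (Y (i-1)) \<ge> 0" using Nge0[OF norm] Y_car[OF Sinv ii(4,6)] by simp
      show "N (Y i) \<le> N (minv (A i) * C (i-1)) * N (Y (i-1)) + N (minv (A i) * B i) * N (Y (Suc i))
        \<and> N (minv (A i) * B i) > 0 \<and> N (minv (A i) * C (i-1)) \<ge> 0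
        \<and> N (minv (A i) * C (i-1)) + N (minv (A i) * B i) \<le> 1 \<and> N (Y (i-1)) \<ge> 0"
        using r p b0 f0 rb_bound[OF rbdd norm i] by auto
    qed
  qed
  show ?thesis using partU partY by auto
qed


end
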